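(* Let $p$ be an odd prime such that a Hadamard matrix of size $4p$ exists, and suppose $\alpha\ge1$ satisfies $(\mathcal{H}^{\mathbb{F}_p}_f)_\alpha\in\Delta(\mathcal{A},\le)$. Then $$\alpha\ge\frac{\log\binom{4p-1}{2p}-\log\sum_{i=0}^{p-1}\binom{4p-1}{i}-\log(4p-1)}{\log(4p-1)}\ge\frac{(4p-1)\left[h\!\left(\tfrac12+\tfrac1{8p-2}\right)-h\!\left(\tfrac14+\tfrac1{16p-4}\right)\right]-\log(16p^2-4p)}{\log(4p-1)},$$ where $h(x)=-x\log x-(1-x)\log(1-x)$ is the binary entropy and $\log$ is base $2$.
   Context: For a field $\mathbb{F}$, an $a/b$-subspace representation of a graph $G$ over $\mathbb{F}$ is a family of subspaces $S_g\subseteq\mathbb{F}^a$ ($g\in V(G)$) with $\dim S_g=b$ and $S_g\cap\sum_{g'\not\simeq g}S_{g'}=\{0\}$ for all $g$ (sum over vertices neither equal nor adjacent to $g$). The fractional Haemers bound $\mathcal{H}^{\mathbb{F}}_f(G)$ is the infimum of $a/b$ over all such representations; it belongs to $\Delta(\mathcal{G},\le)$. $\mathbb{F}_p$ is the field with $p$ elements. Graphs are finite simple undirected; $x\simeq x'$ means equal or adjacent. Strong product $G\boxtimes H$: $(g,h)\simeq(g',h')$ iff $g\simeq g'$ and $h\simeq h'$. $H\le G$ for graphs means a homomorphism $\overline{H}\to\overline{G}$ exists. $\Delta(\mathcal{G},\le)$: maps from graphs to $\mathbb{R}_{\ge0}$, $0$ on the empty graph, $1$ on $K_1$, additive under disjoint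 union, multiplicative under $\boxtimes$, monotone under $\le$. A noncommutative graph is a subspace $S\subseteq B(\mathcal{H})$ ($\mathcal{H}$ finite-dimensional) with $I\in S$, $S^*=S$. A cohomomorphism from $T\subseteq B(\mathcal{K})$ to $S\subseteq B(\mathcal{H})$ is a finite family of linear maps $E_i:\mathcal{K}\to\mathcal{H}$ with $\sum_iE_i^*E_i=I$ and $E_i^*SE_j\subseteq T$ for all $i,j$; $T\le S$ if one exists. $\widehat{G}=\operatorname{span}\{|x\rangle\langle x'|:x\simeq x'\}\subseteq B(\mathbb{C}^{V(G)})$, $\mathcal{C}_d=\mathbb{C}I\subseteq B(\mathbb{C}^d)$. $\mathcal{A}$ is the semiring (under $\oplus,\otimes$, up to unitary isomorphism) generated by all $\widehat{G}$ and $\mathcal{C}_d$; its elements have the form $\bigoplus_{d=1}^r\widehat{G_d}\otimes\mathcal{C}_d$. For $f\in\Delta(\mathcal{G},\le)$, $\alpha\ge1$, $f_\alpha(\bigoplus_{d}\widehat{G_d}\otimes\mathcal{C}_d)=\sum_d f(G_d)d^\alpha$. $\Delta(\mathcal{A},\le)$ is the set of $\le$-monotone semiring homomorphisms $\mathcal{A}\to\mathbb{R}_{\ge0}$. *)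

theory Defs
  imports Complex_Main "Jordan_Normal_Form.Matrix"
begin

type_synonym graph = "nat \<times> (nat \<Rightarrow> nat \<Rightarrow> bool)"

definition gwf :: "graph \<Rightarrow> bool" where
  "gwf G \<longleftrightarrow> (\<forall>i j. snd G i j \<longrightarrow> i < fst G \<and> j < fst G \<and> i \<noteq> j \<and> snd G j i)"

definition gsim :: "graph \<Rightarrow> nat \<Rightarrow> nat \<Rightarrow> bool" where
  "gsim G x y \<longleftrightarrow> x = y \<or> snd G x y"

definition gempty :: graph where "gempty = (0, \<lambda>_ _. False)"
definition gK1 :: graph where "gK1 = (1, \<lambda>_ _. False)"

definition gunion :: "graph \<Rightarrow> graph \<Rightarrow> graph" where
  "gunion G H = (fst G + fst H, \<lambda>i j.
     if i < fst G \<and> j < fst G then snd G i j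
     else if fst G \<le> i \<and> fst G \<le> j \<and> i < fst G + fst H \<and> j < fst G + fst H
          then snd H (i - fst G) (j - fst G) else False)"

text \<open>strong product; vertex (x,y) is encoded as x * |V(H)| + y\<close>
definition gstrong :: "graph \<Rightarrow> graph \<Rightarrow> graph" where
  "gstrong G H = (fst G * fst H, \<lambda>i j.
     i < fst G * fst H \<and> j < fst G * fst H \<and> i \<noteq> j \<and>
     gsim G (i div fst H) (j div fst H) \<and> gsim H (i mod fst H) (j mod fst H))"

text \<open>vectors of 'f^a are functions nat => 'f vanishing outside {0..<a}\<close>
definition lincomb :: "'f::field list \<Rightarrow> (nat \<Rightarrow> 'f) list \<Rightarrow> (nat \<Rightarrow> 'f)" where
  "lincomb cs vs = (\<lambda>i. \<Sum>k<length vs. cs ! k * (vs ! k) i)"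

definition fspan :: "(nat \<Rightarrow> 'f::field) set \<Rightarrow> (nat \<Rightarrow> 'f) set" where
  "fspan X = {lincomb cs vs | cs vs. length cs = length vs \<and> set vs \<subseteq> X}"

definition lin_indep :: "(nat \<Rightarrow> 'f::field) list \<Rightarrow> bool" where
  "lin_indep vs \<longleftrightarrow> (\<forall>cs. length cs = length vs \<and> lincomb cs vs = (\<lambda>_. 0)
        \<longrightarrow> (\<forall>k<length vs. cs ! k = 0))"

definition subspace_dim :: "nat \<Rightarrow> nat \<Rightarrow> (nat \<Rightarrow> 'f::field) set \<Rightarrow> bool" where
  "subspace_dim a b S \<longleftrightarrow> (\<forall>v\<in>S. \<forall>i\<ge>a. v i = 0) \<and>
     (\<exists>vs. length vs = b \<and> lin_indep vs \<and> fspan (set vs) = S)"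

definition subspace_rep :: "'f::field itself \<Rightarrow> nat \<Rightarrow> nat \<Rightarrow> graph \<Rightarrow> bool" where
  "subspace_rep _ a b G \<longleftrightarrow> (\<exists>S :: nat \<Rightarrow> (nat \<Rightarrow> 'f) set.
     (\<forall>g<fst G. subspace_dim a b (S g)) \<and>
     (\<forall>g<fst G. S g \<inter> fspan (\<Union>{S g' | g'. g' < fst G \<and> \<not> gsim G g g'}) = {\<lambda>_. 0}))"

definition fHaem :: "'f::field itself \<Rightarrow> graph \<Rightarrow> real" where
  "fHaem F G = Inf {real a / real b | a b. 0 < b \<and> subspace_rep F a b G}"

section \<open>Noncommutative graphs (as pairs (dim, subspace of complex matrices))\<close>

type_synonym ncgraph = "nat \<times> complex mat set"

definition cadj :: "complex mat \<Rightarrow> complex mat" where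
  "cadj A = mat (dim_col A) (dim_row A) (\<lambda>(i,j). cnj (A $$ (j,i)))"

text \<open>T \<le> S : a cohomomorphism from T (on C^m) to S (on C^n) exists\<close>
definition ncg_le :: "ncgraph \<Rightarrow> ncgraph \<Rightarrow> bool" where
  "ncg_le T S \<longleftrightarrow> (\<exists>Es :: complex mat list.
     (\<forall>E\<in>set Es. E \<in> carrier_mat (fst S) (fst T)) \<and>
     foldr (\<lambda>E acc. cadj E * E + acc) Es (0\<^sub>m (fst T) (fst T)) = 1\<^sub>m (fst T) \<and>
     (\<forall>Ei\<in>set Es. \<forall>Ej\<in>set Es. \<forall>X\<in>snd S. cadj Ei * X * Ej \<in> snd T))"

text \<open>hat G tensor C_d = span{ |x><x'| (x \<simeq> x') } tensor C I_d, on C^(|V| * d), index (x,k) = x*d+k\<close>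
definition hat_tensor :: "graph \<Rightarrow> nat \<Rightarrow> ncgraph" where
  "hat_tensor G d = (fst G * d, {M \<in> carrier_mat (fst G * d) (fst G * d).
     \<exists>c. \<forall>i<fst G * d. \<forall>j<fst G * d. M $$ (i,j) =
       (if i mod d = j mod d \<and> gsim G (i div d) (j div d) then c (i div d) (j div d) else 0)})"

definition ncg_dsum :: "ncgraph \<Rightarrow> ncgraph \<Rightarrow> ncgraph" where
  "ncg_dsum S T = (fst S + fst T, {four_block_mat A (0\<^sub>m (fst S) (fst T)) (0\<^sub>m (fst T) (fst S)) B
      | A B. A \<in> snd S \<and> B \<in> snd T})"

section \<open>The semiring A: element [G_1,...,G_r] stands for \<Oplus>_d hat(G_d) \<otimes> C_d\<close>

fun realize_from :: "nat \<Rightarrow> graph list \<Rightarrow> ncgraph" where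
  "realize_from d [] = (0, {0\<^sub>m 0 0})"
| "realize_from d (G # Gs) = ncg_dsum (hat_tensor G d) (realize_from (Suc d) Gs)"

definition realize :: "graph list \<Rightarrow> ncgraph" where
  "realize Gs = realize_from 1 Gs"

definition nth_or_empty :: "graph list \<Rightarrow> nat \<Rightarrow> graph" where
  "nth_or_empty Gs d = (if d < length Gs then Gs ! d else gempty)"

definition A_plus :: "graph list \<Rightarrow> graph list \<Rightarrow> graph list" where
  "A_plus Gs Hs = map (\<lambda>d. gunion (nth_or_empty Gs d) (nth_or_empty Hs d))
                      [0..<max (length Gs) (length Hs)]"

definition A_times :: "graph list \<Rightarrow> graph list \<Rightarrow> graph list" where
  "A_times Gs Hs = map (\<lambda>m. foldr gunion
      [gstrong (Gs ! d) (Hs ! e). d \<leftarrow> [0..<length Gs], e \<leftarrow> [0..<length Hs], (d+1)*(e+1) = m+1]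
      gempty) [0..<length Gs * length Hs]"

definition A_zero :: "graph list" where "A_zero = []"
definition A_one :: "graph list" where "A_one = [gK1]"

definition f_alpha :: "(graph \<Rightarrow> real) \<Rightarrow> real \<Rightarrow> graph list \<Rightarrow> real" where
  "f_alpha f \<alpha> Gs = (\<Sum>d<length Gs. f (Gs ! d) * real (d + 1) powr \<alpha>)"

definition Delta_A :: "(graph list \<Rightarrow> real) \<Rightarrow> bool" where
  "Delta_A F \<longleftrightarrow>
     F A_zero = 0 \<and> F A_one = 1 \<and>
     (\<forall>Gs. list_all gwf Gs \<longrightarrow> F Gs \<ge> 0) \<and>
     (\<forall>Gs Hs. list_all gwf Gs \<and> list_all gwf Hs \<longrightarrow>
        F (A_plus Gs Hs) = F Gs + F Hs \<and> F (A_times Gs Hs) = F Gs * F Hs) \<and>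
     (\<forall>Gs Hs. list_all gwf Gs \<and> list_all gwf Hs \<and> ncg_le (realize Gs) (realize Hs)
        \<longrightarrow> F Gs \<le> F Hs)"

definition hadamard_exists :: "nat \<Rightarrow> bool" where
  "hadamard_exists n \<longleftrightarrow> (\<exists>H :: nat \<Rightarrow> nat \<Rightarrow> int.
     (\<forall>i<n. \<forall>j<n. H i j = 1 \<or> H i j = -1) \<and>
     (\<forall>i<n. \<forall>j<n. (\<Sum>k<n. H i k * H j k) = (if i = j then int n else 0)))"

definition bin_entropy :: "real \<Rightarrow> real" where
  "bin_entropy x = - x * log 2 x - (1 - x) * log 2 (1 - x)"

end

theory Submission
  imports Defs "HOL-Number_Theory.Residues"
begin


lemma binom_step:
  assumes "i < n"
  shows "(n choose (Suc i)) * Suc i = (n choose i) * (n - i)"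
proof -
  obtain m where n: "n = Suc m" using assms by (cases n) auto
  have "Suc i * (Suc m choose Suc i) = Suc m * (m choose i)" by (rule Suc_times_binomial)
  moreover have "(Suc m - i) * (Suc m choose i) = Suc m * ((Suc m - 1) choose i)" by (rule binomial_absorb_comp)
  ultimately show ?thesis using n by (simp add: mult.commute)
qed

lemma aux_cmp1:
  fixes a b c1 c2 :: nat
  assumes "c1 \<le> c2" "b * c1 = a * c2" "c1 > 0" shows "a \<le> b"
proof -
  have "a * c1 \<le> a * c2" using assms by simp
  hence "a * c1 \<le> b * c1" using assms(2) by simp
  thus ?thesis using assms(3) mult_le_cancel2 by blast
qed

lemma aux_cmp2:
  fixes a b c1 c2 :: nat
  assumes "c2 \<le> c1" "b * c1 = a * c2" "c2 > 0" shows "b \<le> a"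
proof -
  have "b * c2 \<le> b * c1" using assms(1) by (rule mult_le_mono2)
  hence "b * c2 \<le> a * c2" using assms(2) by simp
  thus ?thesis using assms(3) mult_le_cancel2 by blast
qed

definition tt :: "nat \<Rightarrow> nat \<Rightarrow> nat \<Rightarrow> nat" where
  "tt n k i = (n choose i) * k ^ i * (n - k) ^ (n - i)"

lemma tt_sum: "k \<le> n \<Longrightarrow> (\<Sum>i\<le>n. tt n k i) = n ^ n"
proof -
  assume "k \<le> n"
  have "n ^ n = (k + (n - k)) ^ n" using \<open>k \<le> n\<close> by simp
  also have "\<dots> = (\<Sum>i\<le>n. of_nat (n choose i) * k ^ i * (n - k) ^ (n - i))"
    by (rule binomial_ring)
  finally show ?thesis by (simp add: tt_def)
qed

lemma tt_rel:
  assumes "i < n"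
  shows "tt n k (Suc i) * Suc i * (n - k) = tt n k i * (n - i) * k"
proof -
  have e: "n - i = Suc (n - Suc i)" using assms by simp
  have "tt n k (Suc i) * Suc i * (n - k) = ((n choose (Suc i)) * Suc i) * k ^ Suc i * (n - k) ^ Suc (n - Suc i)"
    by (simp add: tt_def algebra_simps)
  also have "\<dots> = (n choose i) * (n - i) * k ^ Suc i * (n - k) ^ (n - i)"
    using binom_step[OF assms] e by simp
  also have "\<dots> = tt n k i * (n - i) * k" by (simp add: tt_def algebra_simps)
  finally show ?thesis .
qed

lemma tt_up:
  assumes "0 < k" "k < n" "i < k"
  shows "tt n k i \<le> tt n k (Suc i)"
proof -
  have "Suc i * (n - k) \<le> (n - i) * k"
  proof -
    have "Suc i * (n - k) \<le> k * (n - k)" using assms by (intro mult_right_mono) auto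
    also have "\<dots> \<le> k * (n - i)" using assms by (intro mult_left_mono) auto
    finally show ?thesis by (simp add: mult.commute)
  qed
  moreover have rel: "tt n k (Suc i) * (Suc i * (n - k)) = tt n k i * ((n - i) * k)"
    using tt_rel[of i n k] assms by (simp only: mult.assoc)
  moreover have "Suc i * (n - k) > 0" using assms by simp
  ultimately show ?thesis
    by (rule aux_cmp1)
qed

lemma tt_down:
  assumes "0 < k" "k < n" "k \<le> i" "i < n"
  shows "tt n k (Suc i) \<le> tt n k i"
proof -
  have "(n - i) * k \<le> Suc i * (n - k)"
  proof -
    have "(n - i) * k \<le> (n - k) * k" using assms by (intro mult_right_mono) auto
    also have "\<dots> \<le> (n - k) * Suc i" using assms by (intro mult_left_mono) auto
    finally show ?thesis by (simp add: mult.commute)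
  qed
  moreover have rel: "tt n k (Suc i) * (Suc i * (n - k)) = tt n k i * ((n - i) * k)"
    using tt_rel[of i n k] assms by (simp only: mult.assoc)
  moreover have "(n - i) * k > 0" using assms by simp
  ultimately show ?thesis
    by (rule aux_cmp2)
qed

lemma tt_max:
  assumes "0 < k" "k < n" "i \<le> n"
  shows "tt n k i \<le> tt n k k"
proof (cases "i \<le> k")
  case True
  have "\<forall>j. j \<le> k - i \<longrightarrow> tt n k (k - j) \<le> tt n k k"
  proof (intro allI impI)
    fix j assume "j \<le> k - i"
    thus "tt n k (k - j) \<le> tt n k k"
    proof (induction j)
      case 0 thus ?case by simp
    next
      case (Suc j)
      have "tt n k (k - Suc j) \<le> tt n k (Suc (k - Suc j))"
        using Suc.prems assms by (intro tt_up) auto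
      also have "Suc (k - Suc j) = k - j" using Suc.prems True by simp
      finally show ?case using Suc by simp
    qed
  qed
  from this[rule_format, of "k - i"] True show ?thesis by simp
next
  case False
  have "\<forall>j. k + j \<le> n \<longrightarrow> tt n k (k + j) \<le> tt n k k"
  proof (intro allI impI)
    fix j assume "k + j \<le> n"
    thus "tt n k (k + j) \<le> tt n k k"
    proof (induction j)
      case 0 thus ?case by simp
    next
      case (Suc j)
      have "tt n k (Suc (k + j)) \<le> tt n k (k + j)"
        using Suc.prems assms by (intro tt_down) auto
      thus ?case using Suc by simp
    qed
  qed
  from this[rule_format, of "i - k"] False assms show ?thesis by simp
qed

lemma binom_lower_nat:
  assumes "0 < k" "k < n"
  shows "n ^ n \<le> (n + 1) * ((n choose k) * k ^ k * (n - k) ^ (n - k))"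
proof -
  have "n ^ n = (\<Sum>i\<le>n. tt n k i)" using tt_sum assms by simp
  also have "\<dots> \<le> (\<Sum>i\<le>n. tt n k k)" by (rule sum_mono) (use tt_max assms in auto)
  also have "\<dots> = (n + 1) * tt n k k" by simp
  finally show ?thesis by (simp add: tt_def)
qed

lemma binom_upper_nat:
  assumes "2 * k \<le> n"
  shows "(\<Sum>i<k. n choose i) * (k ^ k * (n - k) ^ (n - k)) \<le> n ^ n"
proof -
  have "(\<Sum>i<k. n choose i) * (k ^ k * (n - k) ^ (n - k)) = (\<Sum>i<k. (n choose i) * (k ^ k * (n - k) ^ (n - k)))"
    by (simp add: sum_distrib_right)
  also have "\<dots> \<le> (\<Sum>i<k. tt n k i)"
  proof (rule sum_mono)
    fix i assume "i \<in> {..<k}"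
    hence i: "i < k" by simp
    have "k ^ k * (n - k) ^ (n - k) = k ^ i * k ^ (k - i) * (n - k) ^ (n - k)"
      using i by (simp add: power_add[symmetric])
    also have "\<dots> \<le> k ^ i * (n - k) ^ (k - i) * (n - k) ^ (n - k)"
      using assms by (intro mult_right_mono mult_left_mono power_mono) auto
    also have "\<dots> = k ^ i * (n - k) ^ (n - i)"
      using i assms by (simp add: power_add[symmetric] mult.assoc)
    finally show "(n choose i) * (k ^ k * (n - k) ^ (n - k)) \<le> tt n k i"
      unfolding tt_def by (simp add: mult.assoc)
  qed
  also have "\<dots> \<le> (\<Sum>i\<le>n. tt n k i)" by (rule sum_mono2) (use assms in auto)
  also have "\<dots> = n ^ n" using assms by (simp add: tt_sum)
  finally show ?thesis .
qed




lemma nh: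
  assumes "0 < k" "k < n"
  shows "real n * bin_entropy (real k / real n) =
     real n * log 2 (real n) - real k * log 2 (real k) - real (n - k) * log 2 (real (n - k))"
proof -
  have n0: "real n > 0" using assms by simp
  have e1: "1 - real k / real n = real (n - k) / real n" using assms n0 by (simp add: field_simps of_nat_diff)
  have l1: "log 2 (real k / real n) = log 2 (real k) - log 2 (real n)" using assms by (simp add: log_divide)
  have l2: "log 2 (real (n - k) / real n) = log 2 (real (n - k)) - log 2 (real n)" using assms by (simp add: log_divide)
  have "real n * bin_entropy (real k / real n) = - real k * (log 2 (real k) - log 2 (real n))
      - real (n - k) * (log 2 (real (n - k)) - log 2 (real n))"
    unfolding bin_entropy_def e1 l1 l2 using n0 by (simp add: field_simps)
  also have "\<dots> = real n * log 2 (real n) - real k * log 2 (real k) - real (n - k) * log 2 (real (n - k))"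
    using assms by (simp add: algebra_simps of_nat_diff)
  finally show ?thesis .
qed

lemma log4:
  fixes a b c d :: real
  assumes "a > 0" "b > 0" "c > 0" "d > 0"
  shows "log 2 (a * b * c * d) = log 2 a + log 2 b + log 2 c + log 2 d"
  using assms by (simp add: log_mult)

lemma L1:
  assumes "0 < k" "k < n"
  shows "log 2 (real (n choose k)) \<ge> real n * bin_entropy (real k / real n) - log 2 (real n + 1)"
proof -
  have "real (n ^ n) \<le> real ((n + 1) * ((n choose k) * k ^ k * (n - k) ^ (n - k)))"
    using binom_lower_nat[OF assms] by linarith
  also have "\<dots> = (real n + 1) * real (n choose k) * real k ^ k * real (n - k) ^ (n - k)"
    by (simp only: of_nat_mult of_nat_power of_nat_add of_nat_1 mult.assoc)
  finally have le: "real (n ^ n) \<le> (real n + 1) * real (n choose k) * real k ^ k * real (n - k) ^ (n - k)" .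
  have "log 2 (real (n ^ n)) \<le> log 2 ((real n + 1) * real (n choose k) * real k ^ k * real (n - k) ^ (n - k))"
    using assms le by (intro log_mono) auto
  moreover have "log 2 (real (n ^ n)) = real n * log 2 (real n)"
    using assms by (simp add: log_nat_power)
  moreover have "log 2 ((real n + 1) * real (n choose k) * real k ^ k * real (n - k) ^ (n - k))
     = log 2 (real n + 1) + log 2 (real (n choose k)) + real k * log 2 (real k) + real (n - k) * log 2 (real (n - k))"
    using assms by (subst log4) (auto simp: log_nat_power simp del: of_nat_diff)
  ultimately show ?thesis using nh[OF assms] by linarith
qed

lemma L2:
  assumes "0 < k" "2 * k \<le> n"
  shows "log 2 (\<Sum>i<k. real (n choose i)) \<le> real n * bin_entropy (real k / real n)"
proof -
  have kn: "k < n" using assms by simp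
  have "(\<Sum>i<k. real (n choose i)) * real k ^ k * real (n - k) ^ (n - k)
       = real ((\<Sum>i<k. n choose i) * (k ^ k * (n - k) ^ (n - k)))"
    by (simp only: of_nat_mult of_nat_power of_nat_sum mult.assoc)
  also have "\<dots> \<le> real (n ^ n)"
    using binom_upper_nat[OF assms(2)] by linarith
  finally have le: "(\<Sum>i<k. real (n choose i)) * real k ^ k * real (n - k) ^ (n - k) \<le> real (n ^ n)" .
  have s0: "(\<Sum>i<k. real (n choose i)) > 0" using assms by (intro sum_pos2[of _ 0]) auto
  have "log 2 ((\<Sum>i<k. real (n choose i)) * real k ^ k * real (n - k) ^ (n - k)) \<le> log 2 (real (n ^ n))"
    using le s0 kn assms by (intro log_mono) auto
  moreover have "log 2 (real (n ^ n)) = real n * log 2 (real n)"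
    using assms by (simp add: log_nat_power)
  moreover have "log 2 ((\<Sum>i<k. real (n choose i)) * real k ^ k * real (n - k) ^ (n - k))
     = log 2 (\<Sum>i<k. real (n choose i)) + real k * log 2 (real k) + real (n - k) * log 2 (real (n - k))"
    using assms kn s0 by (simp add: log_mult log_nat_power del: of_nat_diff)
  ultimately show ?thesis using nh[OF assms(1) kn] by linarith
qed

lemma part2:
  fixes p :: nat assumes "p \<ge> 1"
  shows "(log 2 (real ((4*p - 1) choose (2*p)))
                - log 2 (\<Sum>i<p. real ((4*p - 1) choose i))
                - log 2 (4 * real p - 1)) / log 2 (4 * real p - 1)
         \<ge> ((4 * real p - 1) * (bin_entropy (1/2 + 1/(8 * real p - 2))
                                 - bin_entropy (1/4 + 1/(16 * real p - 4)))
            - log 2 (16 * (real p)^2 - 4 * real p)) / log 2 (4 * real p - 1)"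
proof -
  define n where "n = 4 * p - 1"
  have rn: "real n = 4 * real p - 1" using assms by (simp add: n_def of_nat_diff)
  have e8: "8 * real p - 2 = 2 * real n" using rn by simp
  have npos: "real n > 0" using rn assms by (simp add: n_def)
  have a1: "1/2 + 1/(8 * real p - 2) = real (2 * p) / real n"
    unfolding e8 using npos rn by (simp add: field_simps)
  have e16: "16 * real p - 4 = 4 * real n" using rn by simp
  have a2: "1/4 + 1/(16 * real p - 4) = real p / real n"
    unfolding e16 using npos rn by (simp add: field_simps)
  have a3: "16 * (real p)^2 - 4 * real p = real n * (real n + 1)"
    unfolding rn by (simp add: algebra_simps power2_eq_square)
  have i1: "log 2 (real (n choose (2*p))) \<ge> real n * bin_entropy (real (2*p) / real n) - log 2 (real n + 1)"
    using assms by (intro L1) (auto simp: n_def)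
  have i2: "log 2 (\<Sum>i<p. real (n choose i)) \<le> real n * bin_entropy (real p / real n)"
    using assms by (intro L2) (auto simp: n_def)
  have lg: "log 2 (real n * (real n + 1)) = log 2 (real n) + log 2 (real n + 1)"
    using npos by (simp add: log_mult)
  have "real p \<ge> 1" using assms by simp
  hence g1: "real n > 1" unfolding rn by simp
  have pos: "log 2 (real n) > 0" using g1 by simp
  have "(4 * real p - 1) * (bin_entropy (1/2 + 1/(8 * real p - 2)) - bin_entropy (1/4 + 1/(16 * real p - 4)))
            - log 2 (16 * (real p)^2 - 4 * real p)
       \<le> log 2 (real ((4*p - 1) choose (2*p))) - log 2 (\<Sum>i<p. real ((4*p - 1) choose i)) - log 2 (4 * real p - 1)"
    unfolding a1 a2 a3 lg rn[symmetric] n_def[symmetric] using i1 i2 assms n_def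
    by (simp add: algebra_simps)
  thus ?thesis using pos rn by (intro divide_right_mono) auto
qed




lemma char_p:
  assumes "card (UNIV :: 'f::{field,finite} set) = p" "prime p"
  shows "(of_nat x = (0::'f)) \<longleftrightarrow> p dvd x"
proof -
  have d: "CHAR('f) dvd p" using CHAR_dvd_CARD[where 'a='f] assms by simp
  have "CHAR('f) \<noteq> 1"
  proof
    assume "CHAR('f) = 1"
    hence "of_nat 1 = (0::'f)" by (simp only: of_nat_eq_0_iff_char_dvd) simp
    thus False by simp
  qed
  hence "CHAR('f) = p" using d assms(2) by (auto simp: prime_nat_iff)
  thus ?thesis by (simp add: of_nat_eq_0_iff_char_dvd)
qed

lemma binom_dvd:
  assumes "prime p" "m \<le> 2 * p - 2" "m \<noteq> p - 1"
  shows "p dvd (m choose (p - 1))"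
proof (cases "m < p - 1")
  case True thus ?thesis by (simp add: binomial_eq_0)
next
  case False
  hence m: "p \<le> m" using assms by auto
  have p2: "p \<ge> 2" using assms prime_ge_2_nat by blast
  have e: "fact (p - 1) * fact (m - (p - 1)) * (m choose (p - 1)) = (fact m :: nat)"
    using m by (intro binomial_fact_lemma) simp
  have "p dvd (fact m :: nat)" using assms(1) m by (simp add: prime_dvd_fact_iff)
  hence "p dvd fact (p - 1) * fact (m - (p - 1)) * (m choose (p - 1))" using e by simp
  moreover have "\<not> p dvd (fact (p - 1) :: nat)" using assms(1) p2 by (simp add: prime_dvd_fact_iff)
  moreover have "\<not> p dvd (fact (m - (p - 1)) :: nat)" using assms p2 by (simp add: prime_dvd_fact_iff)
  ultimately show ?thesis using assms(1) by (simp add: prime_dvd_mult_iff)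
qed

lemma binom_ndvd:
  assumes "prime p"
  shows "\<not> p dvd ((2 * p - 1) choose (p - 1))"
proof
  assume a: "p dvd ((2 * p - 1) choose (p - 1))"
  have p2: "p \<ge> 2" using assms prime_ge_2_nat by blast
  have e: "fact (p - 1) * fact (2 * p - 1 - (p - 1)) * ((2 * p - 1) choose (p - 1)) = (fact (2 * p - 1) :: nat)"
    by (intro binomial_fact_lemma) simp
  have e2: "2 * p - 1 - (p - 1) = p" using p2 by simp
  have e3: "(fact (2 * p - 1) :: nat) = fact p * \<Prod>{Suc p..2 * p - 1}"
    using p2 by (intro fact_eq_fact_times) simp
  have "fact p * (fact (p - 1) * ((2 * p - 1) choose (p - 1))) = fact p * (\<Prod>{Suc p..2 * p - 1})"
    using e e2 e3 by (simp add: algebra_simps)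
  hence e4: "fact (p - 1) * ((2 * p - 1) choose (p - 1)) = \<Prod>{Suc p..2 * p - 1}"
    by (simp del: fact_Suc)
  have "p dvd \<Prod>{Suc p..2 * p - 1}" using a e4[symmetric] by simp
  then obtain x where x: "x \<in> {Suc p..2 * p - 1}" "p dvd x"
    using assms by (auto simp: prime_dvd_prod_iff)
  then obtain q where "x = p * q" by blast
  moreover have "Suc p \<le> x" "x \<le> 2 * p - 1" using x(1) by auto
  ultimately have "p * 1 < p * q" "p * q < p * 2" using p2 by linarith+
  hence "1 < q" "q < 2" by (simp_all only: mult_less_cancel1)
  thus False by simp
qed

lemma lincomb_lin:
  fixes w :: "nat \<Rightarrow> 'f::field"
  shows "(\<Sum>k<a. w k * lincomb cs vs k) = (\<Sum>m<length vs. cs ! m * (\<Sum>k<a. w k * (vs ! m) k))"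
proof -
  have "(\<Sum>k<a. w k * lincomb cs vs k) = (\<Sum>k<a. \<Sum>m<length vs. cs ! m * (w k * (vs ! m) k))"
    unfolding lincomb_def by (simp add: sum_distrib_left mult_ac)
  also have "\<dots> = (\<Sum>m<length vs. \<Sum>k<a. cs ! m * (w k * (vs ! m) k))"
    by (rule sum.swap)
  also have "\<dots> = (\<Sum>m<length vs. cs ! m * (\<Sum>k<a. w k * (vs ! m) k))"
    by (simp add: sum_distrib_left)
  finally show ?thesis .
qed

lemma fspan_L0:
  fixes w :: "nat \<Rightarrow> 'f::field"
  assumes "\<forall>x\<in>X. (\<Sum>k<a. w k * x k) = 0" "v \<in> fspan X"
  shows "(\<Sum>k<a. w k * v k) = 0"
proof -
  obtain cs vs where v: "v = lincomb cs vs" "set vs \<subseteq> X"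
    using assms(2) unfolding fspan_def by blast
  have "\<And>m. m < length vs \<Longrightarrow> (\<Sum>k<a. w k * (vs ! m) k) = 0"
    using assms(1) v(2) nth_mem by blast
  thus ?thesis unfolding v(1) lincomb_lin by simp
qed

lemma fspan_single:
  assumes "v \<in> fspan {y}"
  shows "\<exists>c. v = (\<lambda>k. c * y k)"
proof -
  obtain cs vs where v: "v = lincomb cs vs" "set vs \<subseteq> {y}"
    using assms unfolding fspan_def by blast
  have vy: "\<And>m. m < length vs \<Longrightarrow> vs ! m = y" using v(2) nth_mem by blast
  have "v = (\<lambda>k. (\<Sum>m<length vs. cs ! m) * y k)"
    unfolding v(1) lincomb_def by (rule ext) (simp add: vy sum_distrib_right)
  thus ?thesis by blast
qed

lemma zero_fspan: "(\<lambda>_. 0) \<in> fspan X"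
  unfolding fspan_def lincomb_def by (rule CollectI, rule exI[of _ "[]"], rule exI[of _ "[]"]) simp

lemma haem_rep:
  fixes y :: "nat \<Rightarrow> nat \<Rightarrow> 'f::field" and w :: "nat \<Rightarrow> nat \<Rightarrow> 'f"
  assumes yz: "\<And>i k. a \<le> k \<Longrightarrow> y i k = 0"
    and diag: "\<And>i. i < fst G \<Longrightarrow> (\<Sum>k<a. w i k * y i k) \<noteq> 0"
    and off: "\<And>i j. i < fst G \<Longrightarrow> j < fst G \<Longrightarrow> \<not> gsim G i j \<Longrightarrow> (\<Sum>k<a. w i k * y j k) = 0"
  shows "subspace_rep TYPE('f) a 1 G"
  unfolding subspace_rep_def
proof (intro exI[of _ "\<lambda>g. fspan {y g}"] conjI allI impI)
  fix g assume g: "g < fst G"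
  show "subspace_dim a 1 (fspan {y g})"
    unfolding subspace_dim_def
  proof (intro conjI ballI allI impI exI[of _ "[y g]"])
    fix v i assume "v \<in> fspan {y g}" "a \<le> i"
    thus "v i = 0" using fspan_single[of v "y g"] yz by auto
  next
    show "lin_indep [y g]" unfolding lin_indep_def
    proof (intro allI impI)
      fix cs :: "'f list" and k
      assume h: "length cs = length [y g] \<and> lincomb cs [y g] = (\<lambda>_. 0)" and k: "k < length [y g]"
      have "(\<Sum>k<a. w g k * lincomb cs [y g] k) = cs ! 0 * (\<Sum>k<a. w g k * y g k)"
        unfolding lincomb_lin by simp
      moreover have "(\<Sum>k<a. w g k * lincomb cs [y g] k) = 0" using h by simp
      ultimately have "cs ! 0 = 0" using diag[OF g] by simp
      thus "cs ! k = 0" using k by simp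
    qed
  qed simp_all
next
  fix g assume g: "g < fst G"
  let ?U = "\<Union>{fspan {y g'} | g'. g' < fst G \<and> \<not> gsim G g g'}"
  show "fspan {y g} \<inter> fspan ?U = {\<lambda>_. 0}"
  proof
    show "{\<lambda>_. 0} \<subseteq> fspan {y g} \<inter> fspan ?U" using zero_fspan by blast
  next
    show "fspan {y g} \<inter> fspan ?U \<subseteq> {\<lambda>_. 0}"
    proof
      fix v assume v: "v \<in> fspan {y g} \<inter> fspan ?U"
      obtain c where c: "v = (\<lambda>k. c * y g k)" using v fspan_single by blast
      have "\<forall>x\<in>?U. (\<Sum>k<a. w g k * x k) = 0"
      proof
        fix x assume "x \<in> ?U"
        then obtain g' where g': "g' < fst G" "\<not> gsim G g g'" "x \<in> fspan {y g'}" by blast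
        show "(\<Sum>k<a. w g k * x k) = 0"
          by (rule fspan_L0[OF _ g'(3)]) (use off[OF g g'(1) g'(2)] in simp)
      qed
      hence "(\<Sum>k<a. w g k * v k) = 0" using v fspan_L0 by blast
      hence "c * (\<Sum>k<a. w g k * y g k) = 0" unfolding c by (simp add: sum_distrib_left mult_ac)
      hence "c = 0" using diag[OF g] by simp
      thus "v \<in> {\<lambda>_. 0}" using c by simp
    qed
  qed
qed

lemma fHaem_le:
  assumes "subspace_rep TYPE('f::field) a 1 G"
  shows "fHaem TYPE('f) G \<le> real a"
  unfolding fHaem_def
proof (rule cInf_lower)
  show "real a \<in> {real a / real b |a b. 0 < b \<and> subspace_rep TYPE('f) a b G}"
    using assms by force
  show "bdd_below {real a / real b |a b. 0 < b \<and> subspace_rep TYPE('f) a b G}"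
    by (rule bdd_belowI[of _ 0]) auto
qed




lemma sum_ind: "(\<Sum>k\<in>A. if P k then (1::'a::semiring_1) else 0) = of_nat (card {k\<in>A. P k})" if "finite A"
proof -
  have "(\<Sum>k\<in>A. if P k then (1::'a) else 0) = (\<Sum>k\<in>{k\<in>A. P k}. 1)"
    using sum.inter_filter[OF that, of "\<lambda>_. (1::'a)" P] by simp
  thus ?thesis by simp
qed

lemma card_sub_idx:
  fixes n q :: nat and B :: "nat set"
  assumes e: "bij_betw e {..<a} {S. S \<subseteq> {..<n} \<and> card S = q}" and B: "B \<subseteq> {..<n}"
  shows "card {k \<in> {..<a}. e k \<subseteq> B} = card B choose q"
proof -
  have inje: "inj_on e {..<a}" using e by (simp add: bij_betw_def)
  have ime: "e ` {..<a} = {S. S \<subseteq> {..<n} \<and> card S = q}" using e by (simp add: bij_betw_def)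
  have inj: "inj_on e {k \<in> {..<a}. e k \<subseteq> B}" by (rule inj_on_subset[OF inje]) blast
  have img: "e ` {k \<in> {..<a}. e k \<subseteq> B} = {S. S \<subseteq> B \<and> card S = q}"
  proof
    show "e ` {k \<in> {..<a}. e k \<subseteq> B} \<subseteq> {S. S \<subseteq> B \<and> card S = q}"
    proof
      fix S assume "S \<in> e ` {k \<in> {..<a}. e k \<subseteq> B}"
      then obtain k where k: "k < a" "e k \<subseteq> B" "S = e k" by blast
      have "e k \<in> e ` {..<a}" using k by blast
      hence "card (e k) = q" unfolding ime by blast
      thus "S \<in> {S. S \<subseteq> B \<and> card S = q}" using k by blast
    qed
  next
    show "{S. S \<subseteq> B \<and> card S = q} \<subseteq> e ` {k \<in> {..<a}. e k \<subseteq> B}"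
    proof
      fix S assume S: "S \<in> {S. S \<subseteq> B \<and> card S = q}"
      hence "S \<in> {S. S \<subseteq> {..<n} \<and> card S = q}" using B by blast
      hence "S \<in> e ` {..<a}" unfolding ime .
      then obtain k where "k \<in> {..<a}" "S = e k" by blast
      thus "S \<in> e ` {k \<in> {..<a}. e k \<subseteq> B}" using S by blast
    qed
  qed
  have "card {k \<in> {..<a}. e k \<subseteq> B} = card (e ` {k \<in> {..<a}. e k \<subseteq> B})"
    using inj by (simp add: card_image)
  also have "\<dots> = card B choose q" unfolding img
    using finite_subset[OF B finite_lessThan] by (intro n_subsets)
  finally show ?thesis .
qed

lemma fHaem_family:
  fixes p n N :: nat and h :: "nat \<Rightarrow> nat set"
  assumes pr: "prime p" and cf: "card (UNIV :: 'f::{field,finite} set) = p"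
    and hsub: "\<And>i. i < N \<Longrightarrow> h i \<subseteq> {..<n} \<and> card (h i) = 2 * p - 1"
    and hinj: "inj_on h {..<N}"
  shows "fHaem TYPE('f) (N, \<lambda>i j. i < N \<and> j < N \<and> i \<noteq> j \<and> card (h i \<inter> h j) = p - 1) \<le> real (n choose (p - 1))"
proof -
  define G where "G = (N, \<lambda>i j. i < N \<and> j < N \<and> i \<noteq> j \<and> card (h i \<inter> h j) = p - 1)"
  define Mon where "Mon = {S. S \<subseteq> {..<n} \<and> card S = p - 1}"
  have cM: "card Mon = n choose (p - 1)" unfolding Mon_def using n_subsets[of "{..<n}" "p - 1"] by simp
  obtain e where e0: "bij_betw e {0..<card Mon} Mon" using ex_bij_betw_nat_finite[of Mon] Mon_def by auto
  define a where "a = card Mon"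
  have e: "bij_betw e {..<a} {S. S \<subseteq> {..<n} \<and> card S = p - 1}" using e0 unfolding a_def Mon_def
    by (simp add: atLeast0LessThan)
  define y :: "nat \<Rightarrow> nat \<Rightarrow> 'f" where "y = (\<lambda>i k. if k < a \<and> e k \<subseteq> h i then 1 else 0)"
  define w :: "nat \<Rightarrow> nat \<Rightarrow> 'f" where "w = (\<lambda>j k. if e k \<subseteq> h j then 1 else 0)"
  have L: "(\<Sum>k<a. w j k * y i k) = of_nat (card (h i \<inter> h j) choose (p - 1))" if "i < N" for i j
  proof -
    have "(\<Sum>k<a. w j k * y i k) = (\<Sum>k<a. if e k \<subseteq> h i \<inter> h j then 1 else 0)"
      unfolding w_def y_def by (intro sum.cong) auto
    also have "\<dots> = of_nat (card {k \<in> {..<a}. e k \<subseteq> h i \<inter> h j})" by (simp add: sum_ind)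
    also have "card {k \<in> {..<a}. e k \<subseteq> h i \<inter> h j} = card (h i \<inter> h j) choose (p - 1)"
      using hsub[OF that] by (intro card_sub_idx[OF e]) auto
    finally show ?thesis .
  qed
  have "subspace_rep TYPE('f) a 1 G"
  proof (rule haem_rep[where y = y and w = w])
    fix i k assume "a \<le> k" thus "y i k = 0" unfolding y_def by simp
  next
    fix i assume i: "i < fst G"
    hence iN: "i < N" unfolding G_def by simp
    have "(\<Sum>k<a. w i k * y i k) = of_nat ((2 * p - 1) choose (p - 1))" using L[OF iN, of i] hsub[OF iN] by simp
    also have "\<dots> \<noteq> 0" using char_p[OF cf pr] binom_ndvd[OF pr] by simp
    finally show "(\<Sum>k<a. w i k * y i k) \<noteq> 0" .
  next
    fix i j assume i: "i < fst G" and j: "j < fst G" and ns: "\<not> gsim G i j"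
    hence iN: "i < N" and jN: "j < N" unfolding G_def by auto
    have ij: "i \<noteq> j" and nc0: "card (h i \<inter> h j) \<noteq> p - 1" using ns iN jN unfolding G_def gsim_def
      by (simp_all, blast)
    have nc: "card (h j \<inter> h i) \<noteq> p - 1" using nc0 by (simp add: Int_commute)
    have "h j \<noteq> h i" using hinj ij iN jN unfolding inj_on_def by auto
    have fin: "finite (h j)" using hsub[OF jN] finite_subset by blast
    have "card (h j \<inter> h i) < card (h j)"
    proof (rule psubset_card_mono[OF fin])
      show "h j \<inter> h i \<subset> h j"
      proof
        show "h j \<inter> h i \<subseteq> h j" by blast
        show "h j \<inter> h i \<noteq> h j"
        proof
          assume "h j \<inter> h i = h j"
          hence "h j \<subseteq> h i" by blast
          moreover have "finite (h i)" using hsub[OF iN] finite_subset by blast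
          ultimately have "h j = h i" using hsub[OF iN] hsub[OF jN] card_subset_eq[of "h i" "h j"] by simp
          thus False using \<open>h j \<noteq> h i\<close> by simp
        qed
      qed
    qed
    hence "card (h j \<inter> h i) \<le> 2 * p - 2" using hsub[OF jN] by simp
    hence "p dvd (card (h j \<inter> h i) choose (p - 1))" using binom_dvd[OF pr] nc by simp
    thus "(\<Sum>k<a. w i k * y j k) = 0" using L[OF jN, of i] char_p[OF cf pr] by simp
  qed
  hence "fHaem TYPE('f) G \<le> real a" by (rule fHaem_le)
  thus ?thesis unfolding G_def a_def cM .
qed




lemma fb1: "dim_row D = 0 \<Longrightarrow> dim_col D = 0 \<Longrightarrow> A \<in> carrier_mat r c \<Longrightarrow> four_block_mat A B C D = A"
  unfolding four_block_mat_def Let_def by (rule eq_matI) auto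

lemma fb2: "dim_row A = 0 \<Longrightarrow> dim_col A = 0 \<Longrightarrow> four_block_mat A B C D = D"
  unfolding four_block_mat_def Let_def by (rule eq_matI) auto

lemma R_fst: "fst (realize_from k (replicate m gempty @ [G])) = fst G * (k + m)"
proof (induction m arbitrary: k)
  case 0 thus ?case by (simp add: ncg_dsum_def hat_tensor_def)
next
  case (Suc m) thus ?case by (simp add: ncg_dsum_def hat_tensor_def gempty_def)
qed

lemma R_snd: "X \<in> snd (realize_from k (replicate m gempty @ [G])) \<Longrightarrow> X \<in> snd (hat_tensor G (k + m))"
proof (induction m arbitrary: k X)
  case 0
  then obtain A where A: "A \<in> snd (hat_tensor G k)" and X: "X = four_block_mat A (0\<^sub>m (fst G * k) 0) (0\<^sub>m 0 (fst G * k)) (0\<^sub>m 0 0)"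
    by (auto simp: ncg_dsum_def hat_tensor_def)
  have "A \<in> carrier_mat (fst G * k) (fst G * k)" using A by (simp add: hat_tensor_def)
  hence "X = A" unfolding X by (intro fb1) auto
  thus ?case using A by simp
next
  case (Suc m)
  have "realize_from k (replicate (Suc m) gempty @ [G]) =
        ncg_dsum (hat_tensor gempty k) (realize_from (Suc k) (replicate m gempty @ [G]))" by simp
  then obtain A B where A: "A \<in> snd (hat_tensor gempty k)" and B: "B \<in> snd (realize_from (Suc k) (replicate m gempty @ [G]))"
     and X: "X = four_block_mat A (0\<^sub>m (fst (hat_tensor gempty k)) (fst (realize_from (Suc k) (replicate m gempty @ [G]))))
                  (0\<^sub>m (fst (realize_from (Suc k) (replicate m gempty @ [G]))) (fst (hat_tensor gempty k))) B"
    using Suc.prems by (auto simp: ncg_dsum_def)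
  have "A \<in> carrier_mat 0 0" using A by (simp add: hat_tensor_def gempty_def)
  hence "X = B" unfolding X by (intro fb2) auto
  thus ?case using Suc.IH[OF B] by simp
qed

lemma T_mem:
  assumes Y: "Y \<in> carrier_mat N N" and off: "\<And>a b. a < N \<Longrightarrow> b < N \<Longrightarrow> a \<noteq> b \<Longrightarrow> Y $$ (a,b) = 0"
  shows "Y \<in> snd (realize [(N, \<lambda>_ _. False)])"
proof -
  have H: "\<forall>i<N*1. \<forall>j<N*1. Y $$ (i,j) = (if i mod 1 = j mod 1 \<and> gsim (N, \<lambda>_ _. False) (i div 1) (j div 1)
      then (\<lambda>i j. Y $$ (i,j)) (i div 1) (j div 1) else 0)"
    by (auto simp: gsim_def off)
  have Yh: "Y \<in> snd (hat_tensor (N, \<lambda>_ _. False) 1)"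
    unfolding hat_tensor_def snd_conv fst_conv mem_Collect_eq
    using Y H by (intro conjI exI[of _ "\<lambda>i j. Y $$ (i,j)"]) simp_all
  have eqY: "Y = four_block_mat Y (0\<^sub>m N 0) (0\<^sub>m 0 N) (0\<^sub>m 0 0)"
    using Y by (intro fb1[symmetric]) auto
  have fS: "fst (hat_tensor (N, \<lambda>_ _. False) 1) = N" by (simp add: hat_tensor_def)
  show ?thesis unfolding realize_def realize_from.simps ncg_dsum_def snd_conv fS fst_conv
    using Yh eqY by blast
qed

lemma T_fst: "fst (realize [(N, \<lambda>_ _. False)]) = N"
  unfolding realize_def by (simp add: ncg_dsum_def hat_tensor_def)

definition KE :: "nat \<Rightarrow> nat \<Rightarrow> (nat \<Rightarrow> nat \<Rightarrow> real) \<Rightarrow> nat \<Rightarrow> complex mat" where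
  "KE N d u v = mat (N * d) N (\<lambda>(i,j). if j = v \<and> i div d = v then complex_of_real (u v (i mod d)) else 0)"

lemma KE_carrier: "KE N d u v \<in> carrier_mat (N * d) N" unfolding KE_def by simp

lemma block_sum:
  fixes f :: "nat \<Rightarrow> 'a::comm_monoid_add"
  assumes "v < N" "0 < d"
  shows "(\<Sum>i<N*d. if i div d = v then f i else 0) = (\<Sum>k<d. f (v * d + k))"
proof -
  have "(\<Sum>i<N*d. if i div d = v then f i else 0) = (\<Sum>i\<in>{i\<in>{..<N*d}. i div d = v}. f i)"
    using sum.inter_filter[OF finite_lessThan[of "N*d"], of f "\<lambda>i. i div d = v"] by simp
  also have "{i\<in>{..<N*d}. i div d = v} = (\<lambda>k. v * d + k) ` {..<d}"
  proof
    show "{i\<in>{..<N*d}. i div d = v} \<subseteq> (\<lambda>k. v * d + k) ` {..<d}"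
    proof
      fix i assume "i \<in> {i\<in>{..<N*d}. i div d = v}"
      hence "i div d = v" by simp
      hence "i = v * d + i mod d" by (metis div_mult_mod_eq)
      moreover have "i mod d < d" using assms by simp
      ultimately show "i \<in> (\<lambda>k. v * d + k) ` {..<d}" by blast
    qed
  next
    show "(\<lambda>k. v * d + k) ` {..<d} \<subseteq> {i\<in>{..<N*d}. i div d = v}"
    proof
      fix i assume "i \<in> (\<lambda>k. v * d + k) ` {..<d}"
      then obtain k where k: "k < d" "i = v * d + k" by blast
      have "v * d + k < (v + 1) * d" using k by simp
      also have "\<dots> \<le> N * d" using assms by (intro mult_right_mono) auto
      finally have "i < N * d" using k by simp
      moreover have "i div d = v" using k by simp
      ultimately show "i \<in> {i\<in>{..<N*d}. i div d = v}" by simp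
    qed
  qed
  also have "(\<Sum>i\<in>(\<lambda>k. v * d + k) ` {..<d}. f i) = (\<Sum>k<d. f (v * d + k))"
    by (subst sum.reindex) (auto simp: inj_on_def)
  finally show ?thesis .
qed

lemma cadj_carrier: "A \<in> carrier_mat r c \<Longrightarrow> cadj A \<in> carrier_mat c r"
  unfolding cadj_def by simp

lemma cadj_index: "i < dim_col A \<Longrightarrow> j < dim_row A \<Longrightarrow> cadj A $$ (i,j) = cnj (A $$ (j,i))"
  unfolding cadj_def by simp

lemma mult_entry:
  assumes "A \<in> carrier_mat r m" "B \<in> carrier_mat m c" "i < r" "j < c"
  shows "(A * B) $$ (i,j) = (\<Sum>k<m. A $$ (i,k) * B $$ (k,j))"
  using assms by (simp add: scalar_prod_def atLeast0LessThan)

lemma left_entry: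
  assumes M: "M \<in> carrier_mat (N*d) c" and a: "a < N" and j: "j < c" and v: "v < N" and d: "0 < d"
  shows "(cadj (KE N d u v) * M) $$ (a,j) =
     (if a = v then (\<Sum>k<d. complex_of_real (u v k) * M $$ (v*d+k, j)) else 0)"
proof -
  have C: "cadj (KE N d u v) \<in> carrier_mat N (N*d)" using KE_carrier by (rule cadj_carrier)
  have "(cadj (KE N d u v) * M) $$ (a,j) = (\<Sum>i<N*d. cadj (KE N d u v) $$ (a,i) * M $$ (i,j))"
    by (rule mult_entry[OF C M a j])
  also have "\<dots> = (\<Sum>i<N*d. (if a = v \<and> i div d = v then complex_of_real (u v (i mod d)) else 0) * M $$ (i,j))"
    by (intro sum.cong refl) (simp add: cadj_index KE_def a)
  also have "\<dots> = (if a = v then (\<Sum>k<d. complex_of_real (u v k) * M $$ (v*d+k, j)) else 0)"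
  proof (cases "a = v")
    case True
    have "(\<Sum>i<N*d. (if a = v \<and> i div d = v then complex_of_real (u v (i mod d)) else 0) * M $$ (i,j))
        = (\<Sum>i<N*d. if i div d = v then complex_of_real (u v (i mod d)) * M $$ (i,j) else 0)"
      using True by (intro sum.cong refl) simp
    also have "\<dots> = (\<Sum>k<d. complex_of_real (u v ((v*d+k) mod d)) * M $$ (v*d+k, j))"
      by (rule block_sum[OF v d])
    also have "\<dots> = (\<Sum>k<d. complex_of_real (u v k) * M $$ (v*d+k, j))"
      by (intro sum.cong refl) simp
    finally show ?thesis using True by simp
  qed simp
  finally show ?thesis .
qed

lemma right_entry:
  assumes M: "M \<in> carrier_mat r (N*d)" and a: "a < r" and b: "b < N" and w: "w < N" and d: "0 < d"
  shows "(M * KE N d u w) $$ (a,b) =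
     (if b = w then (\<Sum>l<d. M $$ (a, w*d+l) * complex_of_real (u w l)) else 0)"
proof -
  have "(M * KE N d u w) $$ (a,b) = (\<Sum>i<N*d. M $$ (a,i) * KE N d u w $$ (i,b))"
    by (rule mult_entry[OF M KE_carrier a b])
  also have "\<dots> = (\<Sum>i<N*d. M $$ (a,i) * (if b = w \<and> i div d = w then complex_of_real (u w (i mod d)) else 0))"
    by (intro sum.cong refl) (simp add: KE_def b)
  also have "\<dots> = (if b = w then (\<Sum>l<d. M $$ (a, w*d+l) * complex_of_real (u w l)) else 0)"
  proof (cases "b = w")
    case True
    have "(\<Sum>i<N*d. M $$ (a,i) * (if b = w \<and> i div d = w then complex_of_real (u w (i mod d)) else 0))
        = (\<Sum>i<N*d. if i div d = w then M $$ (a,i) * complex_of_real (u w (i mod d)) else 0)"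
      using True by (intro sum.cong refl) simp
    also have "\<dots> = (\<Sum>k<d. M $$ (a, w*d+k) * complex_of_real (u w ((w*d+k) mod d)))"
      by (rule block_sum[OF w d])
    also have "\<dots> = (\<Sum>k<d. M $$ (a, w*d+k) * complex_of_real (u w k))"
      by (intro sum.cong refl) simp
    finally show ?thesis using True by simp
  qed simp
  finally show ?thesis .
qed

lemma blk_lt: "v < N \<Longrightarrow> k < d \<Longrightarrow> v * d + k < N * (d::nat)"
proof -
  assume "v < N" "k < d"
  hence "v * d + k < (v + 1) * d" by simp
  also have "\<dots> \<le> N * d" using \<open>v < N\<close> by (intro mult_right_mono) auto
  finally show ?thesis .
qed

lemma KE_entry_block:
  assumes "v < N" "k < d" "b < N"
  shows "KE N d u w $$ (v*d+k, b) = (if b = w \<and> v = w then complex_of_real (u w k) else 0)"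
  using assms blk_lt[OF assms(1,2)] unfolding KE_def by auto

lemma kraus_diag:
  assumes v: "v < N" and d: "0 < d" and nrm: "(\<Sum>k<d. (u v k)^2) = 1"
  shows "cadj (KE N d u v) * KE N d u v = mat N N (\<lambda>(a,b). if a = v \<and> b = v then 1 else 0)"
proof (rule eq_matI)
  fix a b assume a: "a < dim_row (mat N N (\<lambda>(a,b). if a = v \<and> b = v then (1::complex) else 0))"
    and b: "b < dim_col (mat N N (\<lambda>(a,b). if a = v \<and> b = v then (1::complex) else 0))"
  hence a: "a < N" and b: "b < N" by auto
  have "(cadj (KE N d u v) * KE N d u v) $$ (a,b) =
     (if a = v then (\<Sum>k<d. complex_of_real (u v k) * KE N d u v $$ (v*d+k, b)) else 0)"
    by (rule left_entry[OF KE_carrier a b v d])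
  also have "\<dots> = (if a = v \<and> b = v then (\<Sum>k<d. complex_of_real (u v k) * complex_of_real (u v k)) else 0)"
  proof -
    have "(\<Sum>k<d. complex_of_real (u v k) * KE N d u v $$ (v*d+k, b)) =
       (\<Sum>k<d. complex_of_real (u v k) * (if b = v then complex_of_real (u v k) else 0))"
      by (intro sum.cong refl) (simp add: KE_entry_block[OF v _ b])
    thus ?thesis by (cases "b = v") auto
  qed
  also have "(\<Sum>k<d. complex_of_real (u v k) * complex_of_real (u v k)) = complex_of_real (\<Sum>k<d. (u v k)^2)"
    by (simp add: power2_eq_square)
  also have "\<dots> = 1" using nrm by simp
  finally show "(cadj (KE N d u v) * KE N d u v) $$ (a,b) = mat N N (\<lambda>(a,b). if a = v \<and> b = v then 1 else 0) $$ (a,b)"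
    using a b by simp
qed (auto simp: cadj_def KE_def)

lemma kraus_off:
  assumes X: "X \<in> snd (hat_tensor G d)" and fG: "fst G = N" and v: "v < N" and w: "w < N" and d: "0 < d"
    and orth: "v \<noteq> w \<Longrightarrow> snd G v w \<Longrightarrow> (\<Sum>k<d. u v k * u w k) = 0"
    and a: "a < N" and b: "b < N" and ab: "a \<noteq> b"
  shows "(cadj (KE N d u v) * X * KE N d u w) $$ (a,b) = 0"
proof -
  have Xc: "X \<in> carrier_mat (N*d) (N*d)" using X fG by (simp add: hat_tensor_def)
  obtain c where c: "\<And>i j. i < N*d \<Longrightarrow> j < N*d \<Longrightarrow> X $$ (i,j) =
      (if i mod d = j mod d \<and> gsim G (i div d) (j div d) then c (i div d) (j div d) else 0)"
    using X fG by (auto simp: hat_tensor_def)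
  have C: "cadj (KE N d u v) * X \<in> carrier_mat N (N*d)"
    using cadj_carrier[OF KE_carrier] Xc by (rule mult_carrier_mat)
  have "(cadj (KE N d u v) * X * KE N d u w) $$ (a,b) =
     (if b = w then (\<Sum>l<d. (cadj (KE N d u v) * X) $$ (a, w*d+l) * complex_of_real (u w l)) else 0)"
    by (rule right_entry[OF C a b w d])
  also have "\<dots> = 0"
  proof (cases "b = w")
    case True
    have L: "(cadj (KE N d u v) * X) $$ (a, w*d+l) =
       (if a = v then (\<Sum>k<d. complex_of_real (u v k) * X $$ (v*d+k, w*d+l)) else 0)" if "l < d" for l
      by (rule left_entry[OF Xc a blk_lt[OF w that] v d])
    show ?thesis
    proof (cases "a = v")
      case False thus ?thesis using True L by simp
    next
      case av: True
      hence vw: "v \<noteq> w" using ab True by simp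
      have Xe: "X $$ (v*d+k, w*d+l) = (if k = l \<and> snd G v w then c v w else 0)" if "k < d" "l < d" for k l
        using c[OF blk_lt[OF v that(1)] blk_lt[OF w that(2)]] that vw by (simp add: gsim_def)
      show ?thesis
      proof (cases "snd G v w")
        case False
        thus ?thesis using True av L Xe by simp
      next
        case sG: True
        have "(\<Sum>l<d. (cadj (KE N d u v) * X) $$ (a, w*d+l) * complex_of_real (u w l))
            = (\<Sum>l<d. (\<Sum>k<d. complex_of_real (u v k) * (if k = l then c v w else 0)) * complex_of_real (u w l))"
          using L av Xe sG by (intro sum.cong refl) simp
        also have "\<dots> = (\<Sum>l<d. c v w * complex_of_real (u v l * u w l))"
          by (intro sum.cong refl) (simp add: if_distrib cong: if_cong)
        also have "\<dots> = c v w * complex_of_real (\<Sum>l<d. u v l * u w l)"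
          by (simp add: sum_distrib_left)
        also have "\<dots> = 0" using orth[OF vw sG] by simp
        finally show ?thesis using True by simp
      qed
    qed
  qed simp
  finally show ?thesis .
qed

lemma foldr_kraus:
  fixes E :: "nat \<Rightarrow> complex mat"
  assumes "distinct xs" "set xs \<subseteq> {..<N}"
    "\<And>v. v \<in> set xs \<Longrightarrow> cadj (E v) * E v = mat N N (\<lambda>(a,b). if a = v \<and> b = v then 1 else 0)"
  shows "foldr (\<lambda>E acc. cadj E * E + acc) (map E xs) (0\<^sub>m N N) = mat N N (\<lambda>(a,b). if a = b \<and> a \<in> set xs then 1 else 0)"
  using assms
proof (induction xs)
  case Nil
  show ?case by (rule eq_matI) auto
next
  case (Cons x xs)
  have IH: "foldr (\<lambda>E acc. cadj E * E + acc) (map E xs) (0\<^sub>m N N) = mat N N (\<lambda>(a,b). if a = b \<and> a \<in> set xs then 1 else 0)"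
    using Cons by auto
  have "foldr (\<lambda>E acc. cadj E * E + acc) (map E (x # xs)) (0\<^sub>m N N)
      = mat N N (\<lambda>(a,b). if a = x \<and> b = x then 1 else 0) + mat N N (\<lambda>(a,b). if a = b \<and> a \<in> set xs then 1 else 0)"
    using IH Cons.prems(3)[of x] by simp
  also have "\<dots> = mat N N (\<lambda>(a,b). if a = b \<and> a \<in> set (x # xs) then 1 else 0)"
    using Cons.prems(1) by (intro eq_matI) auto
  finally show ?case .
qed

lemma ncg_main:
  fixes G :: graph and u :: "nat \<Rightarrow> nat \<Rightarrow> real"
  assumes fG: "fst G = N" and d: "0 < d"
    and nrm: "\<And>v. v < N \<Longrightarrow> (\<Sum>k<d. (u v k)^2) = 1"
    and orth: "\<And>v w. v < N \<Longrightarrow> w < N \<Longrightarrow> v \<noteq> w \<Longrightarrow> snd G v w \<Longrightarrow> (\<Sum>k<d. u v k * u w k) = 0"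
  shows "ncg_le (realize [(N, \<lambda>_ _. False)]) (realize (replicate (d - 1) gempty @ [G]))"
proof -
  have fS: "fst (realize (replicate (d - 1) gempty @ [G])) = N * d"
    unfolding realize_def R_fst fG using d by simp
  have sS: "X \<in> snd (hat_tensor G d)" if "X \<in> snd (realize (replicate (d - 1) gempty @ [G]))" for X
    using R_snd[OF that[unfolded realize_def]] d by simp
  show ?thesis unfolding ncg_le_def fS T_fst
  proof (intro exI[of _ "map (KE N d u) [0..<N]"] conjI ballI)
    fix E assume "E \<in> set (map (KE N d u) [0..<N])"
    thus "E \<in> carrier_mat (N * d) N" using KE_carrier by auto
  next
    have "foldr (\<lambda>E acc. cadj E * E + acc) (map (KE N d u) [0..<N]) (0\<^sub>m N N)
        = mat N N (\<lambda>(a,b). if a = b \<and> a \<in> set [0..<N] then 1 else 0)"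
      by (rule foldr_kraus) (auto intro: kraus_diag d nrm)
    also have "\<dots> = 1\<^sub>m N" by (rule eq_matI) auto
    finally show "foldr (\<lambda>E acc. cadj E * E + acc) (map (KE N d u) [0..<N]) (0\<^sub>m N N) = 1\<^sub>m N" .
  next
    fix Ei Ej X assume Ei: "Ei \<in> set (map (KE N d u) [0..<N])" and Ej: "Ej \<in> set (map (KE N d u) [0..<N])"
      and X: "X \<in> snd (realize (replicate (d - 1) gempty @ [G]))"
    obtain v where v: "v < N" "Ei = KE N d u v" using Ei by auto
    obtain w where w: "w < N" "Ej = KE N d u w" using Ej by auto
    have Xh: "X \<in> snd (hat_tensor G d)" by (rule sS[OF X])
    have Xc: "X \<in> carrier_mat (N*d) (N*d)" using Xh fG by (simp add: hat_tensor_def)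
    have C: "cadj Ei * X * Ej \<in> carrier_mat N N"
      unfolding v w using cadj_carrier[OF KE_carrier] Xc KE_carrier
      by (intro mult_carrier_mat) auto
    show "cadj Ei * X * Ej \<in> snd (realize [(N, \<lambda>_ _. False)])"
    proof (rule T_mem[OF C])
      fix a b assume "a < N" "b < N" "a \<noteq> b"
      thus "(cadj Ei * X * Ej) $$ (a,b) = 0"
        unfolding v w using kraus_off[OF Xh fG v(1) w(1) d] orth v w by blast
    qed
  qed
qed




lemma gwf_none: "gwf (n, \<lambda>_ _. False)" by (simp add: gwf_def)

lemma A_plus_none: "A_plus [(n, \<lambda>_ _. False)] [gK1] = [(Suc n, \<lambda>_ _. False)]"
  unfolding A_plus_def nth_or_empty_def gunion_def gK1_def by (simp add: fun_eq_iff)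

lemma F_K:
  assumes D: "Delta_A F" and n: "n \<ge> 1"
  shows "F [(n, \<lambda>_ _. False)] = real n"
  using n
proof (induction n)
  case 0 thus ?case by simp
next
  case (Suc n)
  have one: "F [gK1] = 1" using D unfolding Delta_A_def A_one_def by blast
  show ?case
  proof (cases "n = 0")
    case True
    thus ?thesis using one by (simp add: gK1_def)
  next
    case False
    have add: "F (A_plus [(n, \<lambda>_ _. False)] [gK1]) = F [(n, \<lambda>_ _. False)] + F [gK1]"
      using D gwf_none[of n] gwf_none[of 1] unfolding Delta_A_def gK1_def by simp
    thus ?thesis using Suc.IH False one by (simp add: A_plus_none)
  qed
qed

lemma fHaem_gempty: "fHaem TYPE('f::field) gempty \<le> 0"
proof -
  have "subspace_rep TYPE('f) 0 1 gempty" unfolding subspace_rep_def gempty_def by simp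
  from fHaem_le[OF this] show ?thesis by simp
qed

lemma F_R:
  "f_alpha (fHaem TYPE('f::field)) \<alpha> (replicate m gempty @ [G]) \<le> fHaem TYPE('f) G * real (m + 1) powr \<alpha>"
proof -
  have "f_alpha (fHaem TYPE('f)) \<alpha> (replicate m gempty @ [G]) =
     (\<Sum>k<m. fHaem TYPE('f) gempty * real (k + 1) powr \<alpha>) + fHaem TYPE('f) G * real (m + 1) powr \<alpha>"
    unfolding f_alpha_def by (simp add: nth_append)
  also have "(\<Sum>k<m. fHaem TYPE('f) gempty * real (k + 1) powr \<alpha>) \<le> 0"
    using fHaem_gempty[where 'f='f] by (intro sum_nonpos mult_nonpos_nonneg) auto
  finally show ?thesis by simp
qed

lemma pm_inner:
  fixes A B :: "nat set"
  assumes A: "A \<subseteq> {..<n}" and B: "B \<subseteq> {..<n}"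
  shows "(\<Sum>k<n. (if k \<in> A then 1 else -1) * (if k \<in> B then 1 else -1) :: real)
     = 4 * real (card (A \<inter> B)) - 2 * real (card A) - 2 * real (card B) + real n"
proof -
  have ind: "(\<Sum>k<n. if k \<in> S then 1 else 0 :: real) = real (card S)" if "S \<subseteq> {..<n}" for S
  proof -
    have "(\<Sum>k<n. if k \<in> S then 1 else 0 :: real) = of_nat (card {k \<in> {..<n}. k \<in> S})"
      by (rule sum_ind) simp
    also have "{k \<in> {..<n}. k \<in> S} = S" using that by blast
    finally show ?thesis by simp
  qed
  have "(\<Sum>k<n. (if k \<in> A then 1 else -1) * (if k \<in> B then 1 else -1) :: real)
     = (\<Sum>k<n. 4 * (if k \<in> A \<inter> B then 1 else 0) - 2 * (if k \<in> A then 1 else 0) - 2 * (if k \<in> B then 1 else 0) + 1)"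
    by (intro sum.cong refl) auto
  also have "\<dots> = 4 * (\<Sum>k<n. if k \<in> A \<inter> B then 1 else 0) - 2 * (\<Sum>k<n. if k \<in> A then 1 else 0)
       - 2 * (\<Sum>k<n. if k \<in> B then 1 else 0) + real n"
    by (simp add: sum.distrib sum_subtractf sum_distrib_left)
  also have "\<dots> = 4 * real (card (A \<inter> B)) - 2 * real (card A) - 2 * real (card B) + real n"
    using ind[of "A \<inter> B"] ind[OF A] ind[OF B] A by auto
  finally show ?thesis .
qed

lemma final_ineq:
  fixes X \<alpha> a b n :: real
  assumes "b > 0" "a \<ge> b" "\<alpha> * a \<ge> X" "X \<le> n" "n > 0" "a - b \<le> 2 / n" "a * b \<ge> 2" "\<alpha> \<ge> 1"
  shows "\<alpha> \<ge> (X - b) / b"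
proof (cases "X \<le> 0")
  case True
  hence "(X - b) / b \<le> 0" using assms by (simp add: divide_nonpos_pos)
  thus ?thesis using assms by simp
next
  case False
  have a0: "a > 0" using assms by simp
  have "X * (a - b) \<le> n * (2 / n)" using False assms by (intro mult_mono) auto
  also have "\<dots> = 2" using assms by simp
  finally have "X * (a - b) \<le> a * b" using assms by simp
  hence "X * b \<ge> (X - b) * a" by (simp add: algebra_simps)
  hence "(X - b) / b \<le> X / a" using a0 assms by (simp add: field_simps)
  also have "X / a \<le> \<alpha>" using assms a0 by (simp add: field_simps)
  finally show ?thesis .
qed

lemma part1:
  fixes p :: nat and \<alpha> :: real
  assumes pr: "prime p" and od: "odd p"
    and cf: "card (UNIV :: 'f::{field,finite} set) = p"
    and al: "\<alpha> \<ge> 1"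
    and D: "Delta_A (f_alpha (fHaem TYPE('f)) \<alpha>)"
  shows "\<alpha> \<ge> (log 2 (real ((4*p - 1) choose (2*p)))
                - log 2 (\<Sum>i<p. real ((4*p - 1) choose i))
                - log 2 (4 * real p - 1)) / log 2 (4 * real p - 1)"
proof -
  define F where "F = f_alpha (fHaem TYPE('f)) \<alpha>"
  have p2: "p \<ge> 2" using pr prime_ge_2_nat by blast
  have p3: "p \<ge> 3" using p2 od by (cases "p = 2") auto
  define n where "n = 4 * p - 1"
  define Fam where "Fam = {A. A \<subseteq> {..<n} \<and> card A = 2 * p - 1}"
  have cFam: "card Fam = n choose (2 * p - 1)" unfolding Fam_def using n_subsets[of "{..<n}" "2 * p - 1"] by simp
  have finFam: "finite Fam" unfolding Fam_def by (rule finite_subset[of _ "Pow {..<n}"]) auto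
  define N where "N = card Fam"
  obtain h where h: "bij_betw h {0..<N} Fam" using ex_bij_betw_nat_finite[OF finFam] N_def by blast
  have hsub: "h i \<subseteq> {..<n} \<and> card (h i) = 2 * p - 1" if "i < N" for i
    using bij_betw_apply[OF h] that unfolding Fam_def by auto
  have hinj: "inj_on h {..<N}" using bij_betw_imp_inj_on[OF h] by (simp add: atLeast0LessThan)
  define G where "G = (N, \<lambda>i j. i < N \<and> j < N \<and> i \<noteq> j \<and> card (h i \<inter> h j) = p - 1)"
  have fG: "fHaem TYPE('f) G \<le> real (n choose (p - 1))"
    unfolding G_def by (rule fHaem_family[OF pr cf hsub hinj])
  define d where "d = 4 * p"
  have dn: "d = Suc n" unfolding d_def n_def using p2 by simp
  have d0: "0 < d" using dn by simp
  define x where "x = (\<lambda>v k. if k < n then (if k \<in> h v then 1 else -1) else (1::real))"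
  define u where "u = (\<lambda>v k. x v k / sqrt (real d))"
  have nrm: "(\<Sum>k<d. (u v k)^2) = 1" if "v < N" for v
  proof -
    have "(\<Sum>k<d. (u v k)^2) = (\<Sum>k<d. 1 / real d)"
      unfolding u_def x_def using d0 by (intro sum.cong refl) (simp add: power_divide)
    thus ?thesis using d0 by simp
  qed
  have orth: "(\<Sum>k<d. u v k * u w k) = 0" if "v < N" "w < N" "v \<noteq> w" "snd G v w" for v w
  proof -
    have c: "card (h v \<inter> h w) = p - 1" using that unfolding G_def by simp
    have "(\<Sum>k<d. x v k * x w k) = (\<Sum>k<n. x v k * x w k) + x v n * x w n"
      unfolding dn by simp
    also have "(\<Sum>k<n. x v k * x w k) = (\<Sum>k<n. (if k \<in> h v then 1 else -1) * (if k \<in> h w then 1 else -1))"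
      unfolding x_def by (intro sum.cong refl) simp
    also have "\<dots> = 4 * real (card (h v \<inter> h w)) - 2 * real (card (h v)) - 2 * real (card (h w)) + real n"
      using hsub[OF that(1)] hsub[OF that(2)] by (intro pm_inner) auto
    also have "\<dots> = -1" using c hsub[OF that(1)] hsub[OF that(2)] p2 unfolding n_def by (simp add: of_nat_diff)
    finally have "(\<Sum>k<d. x v k * x w k) = 0" unfolding x_def by simp
    hence "(\<Sum>k<d. x v k * x w k) / real d = 0" by simp
    moreover have "(\<Sum>k<d. u v k * u w k) = (\<Sum>k<d. x v k * x w k) / real d"
      unfolding u_def using d0 by (simp add: sum_divide_distrib)
    ultimately show ?thesis by simp
  qed
  have ncg: "ncg_le (realize [(N, \<lambda>_ _. False)]) (realize (replicate (d - 1) gempty @ [G]))"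
    by (rule ncg_main[OF _ d0 nrm orth]) (simp_all add: G_def)
  have gwfG: "gwf G" unfolding G_def gwf_def by (auto simp: Int_commute)
  have gwfe: "gwf gempty" by (simp add: gwf_def gempty_def)
  have N1: "N \<ge> 1" unfolding N_def cFam n_def
    using zero_less_binomial[of "2 * p - 1" "4 * p - 1"] by linarith
  have "real N = F [(N, \<lambda>_ _. False)]" using F_K[OF D[folded F_def] N1] by simp
  also have "\<dots> \<le> F (replicate (d - 1) gempty @ [G])"
    using D[folded F_def] ncg gwfG gwfe gwf_none[of N] unfolding Delta_A_def by (simp add: list_all_iff)
  also have "\<dots> \<le> fHaem TYPE('f) G * real d powr \<alpha>"
    unfolding F_def using F_R[where 'f='f, of \<alpha> "d - 1" G] d0 by simp
  also have "\<dots> \<le> real (n choose (p - 1)) * real d powr \<alpha>"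
    using fG by (intro mult_right_mono) auto
  finally have main: "real N \<le> real (n choose (p - 1)) * real d powr \<alpha>" .
  have Neq: "N = n choose (2 * p)"
    unfolding N_def cFam n_def using p2 by (subst binomial_symmetric) (auto simp: algebra_simps)
  define S where "S = (\<Sum>i<p. real (n choose i))"
  have CS: "real (n choose (p - 1)) \<le> S" unfolding S_def
    using p2 by (intro member_le_sum) auto
  have "0 < n choose (p - 1)" unfolding n_def by (rule zero_less_binomial) simp
  hence C0: "real (n choose (p - 1)) \<ge> 1" by linarith
  define X where "X = log 2 (real (n choose (2 * p))) - log 2 S"
  define a where "a = log 2 (real d)"
  define b where "b = log 2 (4 * real p - 1)"
  have rn: "real n = 4 * real p - 1" unfolding n_def using p2 by (simp add: of_nat_diff)
  have "log 2 (real N) \<le> log 2 (real (n choose (p - 1)) * real d powr \<alpha>)"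
    using main N1 by (intro log_mono) auto
  also have "\<dots> = log 2 (real (n choose (p - 1))) + \<alpha> * a"
  proof -
    have x0: "real (n choose (p - 1)) > 0" using C0 by linarith
    have y0: "real d powr \<alpha> > 0" using d0 by simp
    have "log 2 (real (n choose (p - 1)) * real d powr \<alpha>) = log 2 (real (n choose (p - 1))) + log 2 (real d powr \<alpha>)"
      using x0 y0 by (rule log_mult_pos)
    also have "log 2 (real d powr \<alpha>) = \<alpha> * log 2 (real d)" using d0 by (simp add: log_powr)
    finally show ?thesis unfolding a_def .
  qed
  finally have "log 2 (real N) \<le> log 2 (real (n choose (p - 1))) + \<alpha> * a" .
  moreover have "log 2 (real (n choose (p - 1))) \<le> log 2 S" by (rule log_mono) (use CS C0 in linarith)+
  ultimately have Xa: "X \<le> \<alpha> * a" unfolding X_def Neq by linarith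
  have b8: "4 * real p - 1 \<ge> 8" using p3 by simp
  have b3: "b \<ge> 3"
  proof -
    have "log 2 8 \<le> b" unfolding b_def using b8 by (intro log_mono) auto
    moreover have "log 2 (8::real) = 3"
    proof -
      have "log 2 (8::real) = log 2 (2 ^ 3)" by simp
      also have "\<dots> = 3" by (subst log_nat_power) simp_all
      finally show ?thesis .
    qed
    ultimately show ?thesis by simp
  qed
  have ab: "a \<ge> b" unfolding a_def b_def d_def using p2 by (intro log_mono) auto
  have S1: "S \<ge> 1" using CS C0 by simp
  have Xn: "X \<le> real n"
  proof -
    have "log 2 (real (n choose (2 * p))) \<le> log 2 (2 ^ n)"
      using binomial_le_pow2[of n "2 * p"] p2 unfolding n_def by (intro log_mono) (auto simp: zero_less_binomial)
    also have "\<dots> = real n" by simp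
    moreover have "log 2 S \<ge> 0" using S1 by simp
    ultimately show ?thesis unfolding X_def by linarith
  qed
  have n0: "real n > 0" using rn p2 by simp
  have ln2: "ln 2 \<ge> (1/2::real)"
  proof -
    have "ln (1/2::real) \<le> 1/2 - 1" by (rule ln_le_minus_one) simp
    thus ?thesis by (simp add: ln_div)
  qed
  have amb: "a - b \<le> 2 / real n"
  proof -
    have e1: "1 + 1 / real n = (real n + 1) / real n" using n0 by (simp add: field_simps)
    have e2: "ln ((real n + 1) / real n) = ln (real n + 1) - ln (real n)" using n0 by (simp add: ln_div)
    have "a - b = (ln (real n + 1) - ln (real n)) / ln 2"
      unfolding a_def b_def log_def dn rn[symmetric] by (simp add: diff_divide_distrib add.commute)
    also have "\<dots> = ln (1 + 1 / real n) / ln 2" unfolding e1 e2 ..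
    also have "\<dots> \<le> (1 / real n) / ln 2"
      using n0 by (intro divide_right_mono ln_add_one_self_le_self) auto
    also have "\<dots> \<le> (1 / real n) / (1/2)"
      using ln2 n0 by (intro divide_left_mono) auto
    finally show ?thesis by simp
  qed
  have "(3::real) * 3 \<le> a * b" using b3 ab by (intro mult_mono) auto
  hence ab2: "a * b \<ge> 2" by simp
  have b0: "b > 0" using b3 by simp
  have "\<alpha> \<ge> (X - b) / b"
    by (rule final_ineq[OF b0 ab Xa Xn n0 amb ab2 al])
  thus ?thesis unfolding X_def b_def S_def n_def by simp
qed


theorem proposition3p10:
  fixes p :: nat and \<alpha> :: real
  assumes "prime p" and "odd p"
    and "card (UNIV :: 'f::{field,finite} set) = p"
    and "hadamard_exists (4 * p)"
    and "\<alpha> \<ge> 1"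
    and "Delta_A (f_alpha (fHaem TYPE('f)) \<alpha>)"
  shows "\<alpha> \<ge> (log 2 (real ((4*p - 1) choose (2*p)))
                - log 2 (\<Sum>i<p. real ((4*p - 1) choose i))
                - log 2 (4 * real p - 1)) / log 2 (4 * real p - 1)
       \<and> (log 2 (real ((4*p - 1) choose (2*p)))
                - log 2 (\<Sum>i<p. real ((4*p - 1) choose i))
                - log 2 (4 * real p - 1)) / log 2 (4 * real p - 1)
         \<ge> ((4 * real p - 1) * (bin_entropy (1/2 + 1/(8 * real p - 2))
                                 - bin_entropy (1/4 + 1/(16 * real p - 4)))
            - log 2 (16 * (real p)^2 - 4 * real p)) / log 2 (4 * real p - 1)"
  using part1[OF assms(1,2,3,5,6)] part2[of p] assms(1) prime_ge_1_nat by blast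

end
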